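(* Let $s$ be a term that reduces to an abstraction $t$ by a reduction sequence $s=s_0\succ\cdots\succ s_j=t$ whose largest term has size $m=\max_i|s_i|$. Then there are a program $P$ and a number $m'$ with $P\gg t$ and $m\le m'\le 2m$ such that the substitution machine reduces $\tau_s$ to $([],[P])$ by a sequence of steps whose largest state has size $m'$.
   Context: Terms (de Bruijn): $s::=n\mid st\mid\lambda s$, size $|n|=1+n$, $|\lambda s|=1+|s|$, $|st|=1+|s|+|t|$. Term substitution: $k^k_u=u$, $n^k_u=n$ ($n\ne k$), $(st)^k_u=(s^k_u)(t^k_u)$, $(\lambda s)^k_u=\lambda(s^{k+1}_u)$. Reduction $\succ$: $(\lambda s)(\lambda t)\succ s^0_{\lambda t}$; $s\succ s'\Rightarrow st\succ s't$; $t\succ t'\Rightarrow(\lambda s)t\succ(\lambda s)t'$. Programs are lists of commands $\mathsf{ret},\mathsf{var}\,n,\mathsf{lam},\mathsf{app}$ with sizes $|\mathsf{var}\,n|=1+n$, $|c|=1$ otherwise, $|P|=1+\sum_{c\in P}|c|$. Compilation: $\gamma n=[\mathsf{var}\,n]$, $\gamma(st)=\gamma s++\gamma t++[\mathsf{app}]$, $\gamma(\lambda s)=\mathsf{lam}::\gamma s++[\mathsf{ret}]$. $P\gg s$ iff $P=\gamma u$ and $s=\lambda u$ for some $u$. $\varphi P:=\varphi_{0,[]}P$ with $\varphi_{0,Q}(\mathsf{ret}::P)=(Q,P)$, $\varphi_{k+1,Q}(\mathsf{ret}::P)=\varphi_{k,Q++[\mathsf{ret}]}P$, $\varphi_{k,Q}(\mathsf{lam}::P)=\varphi_{k+1,Q++[\mathsf{lam}]}P$,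 $\varphi_{k,Q}(c::P)=\varphi_{k,Q++[c]}P$ for $c$ a $\mathsf{var}$ or $\mathsf{app}$, undefined otherwise. Program substitution: $(\mathsf{var}\,k::P)^k_Q=Q++P^k_Q$; $(\mathsf{var}\,n::P)^k_Q=\mathsf{var}\,n::P^k_Q$ ($n\ne k$); $(\mathsf{lam}::P)^k_Q=\mathsf{lam}::P^{k+1}_Q$; $(\mathsf{app}::P)^k_Q=\mathsf{app}::P^k_Q$; $(\mathsf{ret}::P)^0_Q=[\mathsf{ret}]$; $(\mathsf{ret}::P)^{k+1}_Q=\mathsf{ret}::P^k_Q$; $[]^k_Q=[]$. The substitution machine has states $(T,V)$ ($T,V$ lists of programs) and steps: $((\mathsf{lam}::P)::T,V)\succ(P'::_{tc}T,\ Q::V)$ if $\varphi P=(Q,P')$; $((\mathsf{app}::P)::T,\ Q::R::V)\succ(R^0_{\mathsf{lam}::Q++[\mathsf{ret}]}::(P::_{tc}T),\ V)$; where $P::_{tc}T:=T$ if $P=[]$, else $P::T$. Initial state $\tau_s:=([\gamma s],[])$. The size of a state $(T,V)$ is the sum of the sizes of all programs in $T$ and in $V$. *)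

theory Defs
  imports Main
begin

datatype tm = TVar nat | TApp tm tm | TLam tm

fun tsize :: "tm \<Rightarrow> nat" where
  "tsize (TVar n) = 1 + n"
| "tsize (TLam s) = 1 + tsize s"
| "tsize (TApp s t) = 1 + tsize s + tsize t"

fun tsubst :: "tm \<Rightarrow> nat \<Rightarrow> tm \<Rightarrow> tm" where
  "tsubst (TVar n) k u = (if n = k then u else TVar n)"
| "tsubst (TApp s t) k u = TApp (tsubst s k u) (tsubst t k u)"
| "tsubst (TLam s) k u = TLam (tsubst s (Suc k) u)"

inductive red :: "tm \<Rightarrow> tm \<Rightarrow> bool" where
  beta: "red (TApp (TLam s) (TLam t)) (tsubst s 0 (TLam t))"
| appL: "red s s' \<Longrightarrow> red (TApp s t) (TApp s' t)"
| appR: "red t t' \<Longrightarrow> red (TApp (TLam s) t) (TApp (TLam s) t')"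

datatype cmd = CRet | CVar nat | CLam | CApp

type_synonym prog = "cmd list"

fun csize :: "cmd \<Rightarrow> nat" where
  "csize (CVar n) = 1 + n"
| "csize CRet = 1"
| "csize CLam = 1"
| "csize CApp = 1"

definition psize :: "prog \<Rightarrow> nat" where
  "psize P = 1 + sum_list (map csize P)"

fun gamma :: "tm \<Rightarrow> prog" where
  "gamma (TVar n) = [CVar n]"
| "gamma (TApp s t) = gamma s @ gamma t @ [CApp]"
| "gamma (TLam s) = CLam # gamma s @ [CRet]"

definition represents :: "prog \<Rightarrow> tm \<Rightarrow> bool" where
  "represents P s \<longleftrightarrow> (\<exists>u. P = gamma u \<and> s = TLam u)"

fun phi_aux :: "nat \<Rightarrow> prog \<Rightarrow> prog \<Rightarrow> (prog \<times> prog) option" where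
  "phi_aux 0 Q (CRet # P) = Some (Q, P)"
| "phi_aux (Suc k) Q (CRet # P) = phi_aux k (Q @ [CRet]) P"
| "phi_aux k Q (CLam # P) = phi_aux (Suc k) (Q @ [CLam]) P"
| "phi_aux k Q (CVar n # P) = phi_aux k (Q @ [CVar n]) P"
| "phi_aux k Q (CApp # P) = phi_aux k (Q @ [CApp]) P"
| "phi_aux k Q [] = None"

definition phi :: "prog \<Rightarrow> (prog \<times> prog) option" where
  "phi P = phi_aux 0 [] P"

fun psubst :: "prog \<Rightarrow> nat \<Rightarrow> prog \<Rightarrow> prog" where
  "psubst (CVar n # P) k Q = (if n = k then Q @ psubst P k Q else CVar n # psubst P k Q)"
| "psubst (CLam # P) k Q = CLam # psubst P (Suc k) Q"
| "psubst (CApp # P) k Q = CApp # psubst P k Q"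
| "psubst (CRet # P) 0 Q = [CRet]"
| "psubst (CRet # P) (Suc k) Q = CRet # psubst P k Q"
| "psubst [] k Q = []"

definition cons_tc :: "prog \<Rightarrow> prog list \<Rightarrow> prog list" where
  "cons_tc P T = (if P = [] then T else P # T)"

type_synonym state = "prog list \<times> prog list"

inductive mstep :: "state \<Rightarrow> state \<Rightarrow> bool" where
  lam: "phi P = Some (Q, P') \<Longrightarrow> mstep ((CLam # P) # T, V) (cons_tc P' T, Q # V)"
| app: "mstep ((CApp # P) # T, Q # R # V)
          (psubst R 0 (CLam # Q @ [CRet]) # cons_tc P T, V)"

definition init_state :: "tm \<Rightarrow> state" where
  "init_state s = ([gamma s], [])"

definition ssize :: "state \<Rightarrow> nat" where
  "ssize st = sum_list (map psize (fst st)) + sum_list (map psize (snd st))"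

definition is_seq :: "('a \<Rightarrow> 'a \<Rightarrow> bool) \<Rightarrow> 'a list \<Rightarrow> bool" where
  "is_seq r xs \<longleftrightarrow> xs \<noteq> [] \<and> (\<forall>i. Suc i < length xs \<longrightarrow> r (xs ! i) (xs ! Suc i))"

end

theory Submission
  imports Defs
begin

datatype tok = TkVar nat | TkLam tm | TkApp

fun code :: "tok list \<Rightarrow> prog" where
  "code [] = []"
| "code (TkVar n # r) = CVar n # code r"
| "code (TkLam u # r) = CLam # gamma u @ CRet # code r"
| "code (TkApp # r) = CApp # code r"

fun toks :: "tm \<Rightarrow> tok list" where
  "toks (TVar n) = [TkVar n]"
| "toks (TLam u) = [TkLam u]"
| "toks (TApp a b) = toks a @ toks b @ [TkApp]"

fun ev :: "tok list \<Rightarrow> tm list \<Rightarrow> tm list option" where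
  "ev [] S = Some S"
| "ev (TkVar n # r) S = ev r (TVar n # S)"
| "ev (TkLam u # r) S = ev r (TLam u # S)"
| "ev (TkApp # r) (b # a # S) = ev r (TApp a b # S)"
| "ev (TkApp # r) S = None"

lemma code_append: "code (r1 @ r2) = code r1 @ code r2"
  by (induction r1 rule: code.induct) auto

lemma code_toks: "code (toks u) = gamma u"
  by (induction u) (auto simp: code_append)

lemma code_Nil_iff: "code r = [] \<longleftrightarrow> r = []"
  by (cases r rule: code.cases) auto

lemma toks_ne: "toks u \<noteq> []"
  by (induction u) auto

lemma ev_toks: "ev (toks u @ r) S = ev r (u # S)"
  by (induction u arbitrary: r S) auto

lemma code_CLam: "code r0 = CLam # P \<Longrightarrow> \<exists>u r. r0 = TkLam u # r \<and> P = gamma u @ CRet # code r"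
  by (cases r0 rule: code.cases) auto

lemma code_CApp: "code r0 = CApp # P \<Longrightarrow> \<exists>r. r0 = TkApp # r \<and> P = code r"
  by (cases r0 rule: code.cases) auto

lemma phi_gamma: "phi_aux k Q (gamma u @ P) = phi_aux k (Q @ gamma u) P"
  by (induction u arbitrary: k Q P) auto

lemma phi_lam: "phi (gamma u @ CRet # P) = Some (gamma u, P)"
  by (simp add: phi_def phi_gamma)

lemma psubst_gamma: "psubst (gamma u @ P) k (gamma (TLam q)) = gamma (tsubst u k (TLam q)) @ psubst P k (gamma (TLam q))"
  by (induction u arbitrary: k P) auto

lemma psubst_gamma0: "psubst (gamma a) 0 (CLam # gamma b @ [CRet]) = gamma (tsubst a 0 (TLam b))"
  using psubst_gamma[of a "[]" 0 b] by simp

datatype ectx = Hole | EL ectx tm | ER tm ectx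

fun plug :: "ectx \<Rightarrow> tm \<Rightarrow> tm" where
  "plug Hole x = x"
| "plug (EL E t) x = TApp (plug E x) t"
| "plug (ER a E) x = TApp (TLam a) (plug E x)"

definition lams :: "tm list \<Rightarrow> bool" where
  "lams S \<longleftrightarrow> (\<forall>z\<in>set S. \<exists>a. z = TLam a)"

lemma ev_ctx: "ev r (A @ plug E x # S) = Some R \<Longrightarrow> lams S \<Longrightarrow>
   \<exists>A' E' S'. R = A' @ plug E' x # S' \<and> lams S' \<and> (\<forall>x'. ev r (A @ plug E x' # S) = Some (A' @ plug E' x' # S'))"
proof (induction r arbitrary: A E S)
  case Nil
  then show ?case by auto
next
  case (Cons t r)
  note IH = Cons.IH and prems = Cons.prems
  show ?case
  proof (cases t)
    case (TkVar n)
    have "ev r ((TVar n # A) @ plug E x # S) = Some R" using prems TkVar by simp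
    from IH[OF this prems(2)] show ?thesis using TkVar by simp
  next
    case (TkLam u)
    have "ev r ((TLam u # A) @ plug E x # S) = Some R" using prems TkLam by simp
    from IH[OF this prems(2)] show ?thesis using TkLam by simp
  next
    case TkApp
    show ?thesis
    proof (cases A)
      case Nil
      then obtain z S0 where S: "S = z # S0" using prems TkApp by (cases S) auto
      from prems(2) S obtain a where z: "z = TLam a" by (auto simp: lams_def)
      have l: "lams S0" using prems(2) S by (simp add: lams_def)
      have "ev r ([] @ plug (ER a E) x # S0) = Some R" using prems(1) Nil S z TkApp by simp
      from IH[OF this l] show ?thesis using Nil S z TkApp by simp
    next
      case (Cons b A1)
      show ?thesis
      proof (cases A1)
        case Nil
        have "ev r ([] @ plug (EL E b) x # S) = Some R" using prems(1) Nil \<open>A = b # A1\<close> TkApp by simp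
        from IH[OF this prems(2)] show ?thesis using Nil \<open>A = b # A1\<close> TkApp by simp
      next
        case (Cons c A0)
        have "ev r ((TApp c b # A0) @ plug E x # S) = Some R" using prems(1) Cons \<open>A = b # A1\<close> TkApp by simp
        from IH[OF this prems(2)] show ?thesis using Cons \<open>A = b # A1\<close> TkApp by simp
      qed
    qed
  qed
qed

lemma red_plug: "red x y \<Longrightarrow> red (plug E x) (plug E y)"
  by (induction E) (auto intro: red.intros)

lemma plug_var_not_lam: "plug E (TVar n) \<noteq> TLam a" "TLam a \<noteq> plug E (TVar n)"
  by (cases E; auto)+

lemma lam_no_red: "\<not> red (TLam a) y"
  by (auto elim: red.cases)

lemma var_no_red: "\<not> red (TVar n) y"
  by (auto elim: red.cases)

lemma stuck_no_red: "\<not> red (plug E (TVar n)) y"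
proof (induction E arbitrary: y)
  case Hole
  then show ?case using var_no_red by simp
next
  case (EL E t)
  show ?case
  proof
    assume "red (plug (EL E t) (TVar n)) y"
    then show False using EL plug_var_not_lam by (auto elim: red.cases)
  qed
next
  case (ER a E)
  show ?case
  proof
    assume "red (plug (ER a E) (TVar n)) y"
    then show False using ER plug_var_not_lam lam_no_red by (auto elim: red.cases)
  qed
qed

lemma red_det: "red x y \<Longrightarrow> red x z \<Longrightarrow> y = z"
proof (induction arbitrary: z rule: red.induct)
  case (beta s t)
  from beta.prems show ?case
    by (cases rule: red.cases) (auto simp: lam_no_red)
next
  case (appL s s' t)
  from appL.prems show ?case
  proof (cases rule: red.cases)
    case beta
    then show ?thesis using appL.hyps lam_no_red by auto
  next
    case appL
    then show ?thesis using appL.IH by auto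
  next
    case appR
    then show ?thesis using appL.hyps lam_no_red by auto
  qed
next
  case (appR t t' s)
  from appR.prems show ?case
  proof (cases rule: red.cases)
    case beta
    then show ?thesis using appR.hyps lam_no_red by auto
  next
    case appL
    then show ?thesis using lam_no_red by auto
  next
    case appR
    then show ?thesis using appR.IH by auto
  qed
qed

definition good :: "tm \<Rightarrow> state \<Rightarrow> bool" where
  "good x st \<longleftrightarrow> (\<exists>TT VV. st = (map code TT, map gamma VV) \<and> (\<forall>r\<in>set TT. r \<noteq> [])
      \<and> ev (concat TT) (map TLam VV) = Some [x])"

definition mu :: "state \<Rightarrow> nat" where
  "mu st = sum_list (map length (fst st))"

lemma lams_map: "lams (map TLam VV)"
  by (auto simp: lams_def)

lemma good_step:
  assumes g: "good x st" and m: "mstep st st'"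
  shows "(good x st' \<and> mu st' < mu st) \<or> (\<exists>y. red x y \<and> good y st')"
proof -
  from g obtain TT VV where st: "st = (map code TT, map gamma VV)" and ne: "\<forall>r\<in>set TT. r \<noteq> []"
    and e: "ev (concat TT) (map TLam VV) = Some [x]" unfolding good_def by blast
  from m show ?thesis
  proof cases
    case (lam P Q P' T V)
    from st lam obtain r0 TT0 where TT: "TT = r0 # TT0" and c0: "code r0 = CLam # P" and T: "T = map code TT0"
      by (auto simp: map_eq_Cons_conv)
    from code_CLam[OF c0] obtain u r where r0: "r0 = TkLam u # r" and P: "P = gamma u @ CRet # code r" by blast
    from lam P have QP: "Q = gamma u" "P' = code r" by (auto simp: phi_lam)
    define TT' where "TT' = (if r = [] then TT0 else r # TT0)"
    have st': "st' = (map code TT', map gamma (u # VV))"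
      using lam st QP T by (auto simp: TT'_def cons_tc_def code_Nil_iff)
    have ne': "\<forall>r\<in>set TT'. r \<noteq> []" using ne TT by (auto simp: TT'_def)
    have e': "ev (concat TT') (map TLam (u # VV)) = Some [x]"
      using e TT r0 by (auto simp: TT'_def)
    have "good x st'" unfolding good_def using st' ne' e' by blast
    moreover have "mu st' < mu st"
      using st st' TT r0 T by (auto simp: mu_def TT'_def)
    ultimately show ?thesis by blast
  next
    case (app P T Q R V)
    from st app obtain r0 TT0 where TT: "TT = r0 # TT0" and c0: "code r0 = CApp # P" and T: "T = map code TT0"
      by (auto simp: map_eq_Cons_conv)
    from code_CApp[OF c0] obtain r where r0: "r0 = TkApp # r" and P: "P = code r" by blast
    from st app obtain b a VV0 where VV: "VV = b # a # VV0" and Q: "Q = gamma b" and R: "R = gamma a"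
      and V: "V = map gamma VV0"
      by (auto simp: map_eq_Cons_conv)
    define c where "c = tsubst a 0 (TLam b)"
    define TT' where "TT' = toks c # (if r = [] then TT0 else r # TT0)"
    have st': "st' = (map code TT', map gamma VV0)"
      using app st P T Q R V by (auto simp: TT'_def cons_tc_def code_Nil_iff code_toks psubst_gamma0 c_def)
    have ne': "\<forall>r\<in>set TT'. r \<noteq> []" using ne TT by (auto simp: TT'_def toks_ne)
    have e1: "ev (r @ concat TT0) ([] @ plug Hole (TApp (TLam a) (TLam b)) # map TLam VV0) = Some [x]"
      using e TT r0 VV by simp
    from ev_ctx[OF e1 lams_map] obtain A' E' S' where
      "[x] = A' @ plug E' (TApp (TLam a) (TLam b)) # S'"
      and h: "\<forall>x'. ev (r @ concat TT0) ([] @ plug Hole x' # map TLam VV0) = Some (A' @ plug E' x' # S')"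
      by blast
    then have x: "x = plug E' (TApp (TLam a) (TLam b))" and A': "A' = []" "S' = []"
      by (auto simp: Cons_eq_append_conv)
    have e': "ev (concat TT') (map TLam VV0) = Some [plug E' c]"
      using h A' by (auto simp: TT'_def ev_toks)
    have "good (plug E' c) st'" unfolding good_def using st' ne' e' by blast
    moreover have "red x (plug E' c)" unfolding x c_def by (rule red_plug) (rule red.beta)
    ultimately show ?thesis by blast
  qed
qed

lemma good_progress:
  assumes g: "good x st" and f: "fst st \<noteq> []"
  shows "(\<exists>st'. mstep st st') \<or> (\<exists>E n. x = plug E (TVar n))"
proof -
  from g obtain TT VV where st: "st = (map code TT, map gamma VV)" and ne: "\<forall>r\<in>set TT. r \<noteq> []"
    and e: "ev (concat TT) (map TLam VV) = Some [x]" unfolding good_def by blast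
  from f st obtain r0 TT0 where TT: "TT = r0 # TT0" by (cases TT) auto
  with ne obtain t r where r0: "r0 = t # r" by (cases r0) auto
  show ?thesis
  proof (cases t)
    case (TkVar n)
    have e1: "ev (r @ concat TT0) ([] @ plug Hole (TVar n) # map TLam VV) = Some [x]"
      using e TT r0 TkVar by simp
    from ev_ctx[OF e1 lams_map] obtain A' E' S' where
      "[x] = A' @ plug E' (TVar n) # S'" by blast
    then have "x = plug E' (TVar n)" by (auto simp: Cons_eq_append_conv)
    then show ?thesis by blast
  next
    case (TkLam u)
    have "mstep ((CLam # (gamma u @ CRet # code r)) # map code TT0, map gamma VV)
        (cons_tc (code r) (map code TT0), gamma u # map gamma VV)"
      by (rule mstep.lam) (rule phi_lam)
    then show ?thesis using st TT r0 TkLam by auto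
  next
    case TkApp
    from e TT r0 TkApp obtain b a VV0 where VV: "VV = b # a # VV0"
    proof -
      have "ev (TkApp # r @ concat TT0) (map TLam VV) = Some [x]" using e TT r0 TkApp by simp
      then show ?thesis using that by (cases VV; cases "tl VV"; auto)
    qed
    have "mstep ((CApp # code r) # map code TT0, gamma b # gamma a # map gamma VV0)
        (psubst (gamma a) 0 (CLam # gamma b @ [CRet]) # cons_tc (code r) (map code TT0), map gamma VV0)"
      by (rule mstep.app)
    then show ?thesis using st TT r0 TkApp VV by auto
  qed
qed

lemma good_final: "good x ([], V) \<Longrightarrow> \<exists>v. V = [gamma v] \<and> x = TLam v"
  unfolding good_def by auto

fun nlam :: "tm \<Rightarrow> nat" where
  "nlam (TVar n) = 0"
| "nlam (TApp a b) = nlam a + nlam b"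
| "nlam (TLam u) = Suc (nlam u)"

fun tokw :: "tok \<Rightarrow> nat" where
  "tokw (TkVar n) = 1 + n"
| "tokw (TkLam u) = 1 + tsize u"
| "tokw TkApp = 1"

fun lamc :: "tok \<Rightarrow> nat" where
  "lamc (TkLam u) = 1 + nlam u"
| "lamc _ = 0"

lemma csum_gamma: "sum_list (map csize (gamma u)) = tsize u + nlam u"
  by (induction u) auto

lemma csum_code: "sum_list (map csize (code r)) = sum_list (map tokw r) + sum_list (map lamc r)"
  by (induction r rule: code.induct) (auto simp: csum_gamma)

lemma nlam_lt: "nlam u < tsize u"
  by (induction u) auto

lemma tok_bound: "lamc t + 1 \<le> tokw t"
  using nlam_lt by (cases t) (auto simp: Suc_le_eq)

lemma toks_bound: "sum_list (map lamc r) + length r \<le> sum_list (map tokw r)"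
proof (induction r)
  case (Cons t r) then show ?case using tok_bound[of t] by simp
qed simp

lemma ev_size: "ev r S = Some R \<Longrightarrow> sum_list (map tsize R) = sum_list (map tsize S) + sum_list (map tokw r)"
  by (induction r S rule: ev.induct) auto

lemma tokw_concat: "sum_list (map tokw (concat TT)) = sum_list (map (\<lambda>r. sum_list (map tokw r)) TT)"
  by (induction TT) auto

lemma prog_bounds: "r \<noteq> [] \<Longrightarrow> sum_list (map tokw r) \<le> psize (code r) \<and> psize (code r) \<le> 2 * sum_list (map tokw r)"
  using toks_bound[of r] by (cases r) (auto simp: psize_def csum_code)

lemma progs_bounds: "\<forall>r\<in>set TT. r \<noteq> [] \<Longrightarrow>
  sum_list (map (\<lambda>r. sum_list (map tokw r)) TT) \<le> sum_list (map psize (map code TT)) \<and>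
  sum_list (map psize (map code TT)) \<le> 2 * sum_list (map (\<lambda>r. sum_list (map tokw r)) TT)"
proof (induction TT)
  case (Cons r TT) then show ?case using prog_bounds[of r] by auto
qed simp

lemma vals_bounds:
  "sum_list (map tsize (map TLam VV)) \<le> sum_list (map psize (map gamma VV)) \<and>
   sum_list (map psize (map gamma VV)) \<le> 2 * sum_list (map tsize (map TLam VV))"
proof (induction VV)
  case (Cons v VV) then show ?case using nlam_lt[of v] by (auto simp: psize_def csum_gamma)
qed simp

lemma good_size: "good x st \<Longrightarrow> tsize x \<le> ssize st \<and> ssize st \<le> 2 * tsize x"
proof -
  assume "good x st"
  then obtain TT VV where st: "st = (map code TT, map gamma VV)" and ne: "\<forall>r\<in>set TT. r \<noteq> []"
    and e: "ev (concat TT) (map TLam VV) = Some [x]" unfolding good_def by blast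
  have "tsize x = sum_list (map tsize (map TLam VV)) + sum_list (map (\<lambda>r. sum_list (map tokw r)) TT)"
    using ev_size[OF e] by (simp add: tokw_concat)
  then show ?thesis using progs_bounds[OF ne] vals_bounds[of VV] st
    by (auto simp: ssize_def)
qed

lemma is_seq_Cons: "is_seq r (x # xs) \<longleftrightarrow> xs = [] \<or> (r x (hd xs) \<and> is_seq r xs)"
proof (cases xs)
  case (Cons y ys)
  have "(\<forall>i. Suc i < length (x # y # ys) \<longrightarrow> r ((x # y # ys) ! i) ((x # y # ys) ! Suc i)) \<longleftrightarrow>
        r x y \<and> (\<forall>i. Suc i < length (y # ys) \<longrightarrow> r ((y # ys) ! i) ((y # ys) ! Suc i))"
    (is "?L \<longleftrightarrow> ?R")
  proof
    assume ?L
    then show ?R by (metis Suc_less_eq length_Cons nth_Cons_Suc zero_less_Suc nth_Cons_0)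
  next
    assume R: ?R
    show ?L
    proof (intro allI impI)
      fix i assume "Suc i < length (x # y # ys)"
      then show "r ((x # y # ys) ! i) ((x # y # ys) ! Suc i)" using R by (cases i) auto
    qed
  qed
  then show ?thesis using Cons by (simp add: is_seq_def)
qed (simp add: is_seq_def)

definition concl :: "tm list \<Rightarrow> state \<Rightarrow> bool" where
  "concl ss st \<longleftrightarrow> (\<exists>sts. is_seq mstep sts \<and> hd sts = st \<and> (\<exists>P. last sts = ([], [P]) \<and> represents P (last ss))
     \<and> (\<forall>y\<in>set sts. \<exists>x\<in>set ss. good x y) \<and> (\<forall>x\<in>set ss. \<exists>y\<in>set sts. good x y))"

lemma run: "is_seq red ss \<Longrightarrow> (\<exists>u. last ss = TLam u) \<Longrightarrow> good (hd ss) st \<Longrightarrow> concl ss st"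
proof (induction ss arbitrary: st)
  case Nil
  then show ?case by (simp add: is_seq_def)
next
  case (Cons x xs)
  note IHo = Cons.IH
  have sq: "is_seq red (x # xs)" and lst: "\<exists>u. last (x # xs) = TLam u" using Cons.prems by auto
  have g: "good x st" using Cons.prems by simp
  have nostuck: "\<not> (\<exists>E n. x = plug E (TVar n))"
  proof
    assume "\<exists>E n. x = plug E (TVar n)"
    then obtain E n where x: "x = plug E (TVar n)" by blast
    show False
    proof (cases xs)
      case Nil then show False using lst x plug_var_not_lam by auto
    next
      case (Cons y ys) then show False using sq x stuck_no_red by (auto simp: is_seq_Cons)
    qed
  qed
  from g show ?case
  proof (induction "mu st" arbitrary: st rule: less_induct)
    case less
    show ?case
    proof (cases "fst st = []")
      case True
      then obtain V where st: "st = ([], V)" by (cases st) auto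
      from good_final less.prems st obtain v where V: "V = [gamma v]" and x: "x = TLam v" by blast
      have xs: "xs = []"
      proof (rule ccontr)
        assume "xs \<noteq> []"
        then have "red x (hd xs)" using sq by (simp add: is_seq_Cons)
        then show False using x lam_no_red by simp
      qed
      show ?thesis unfolding concl_def
        by (rule exI[of _ "[st]"]) (use st V x xs less.prems in \<open>auto simp: is_seq_def represents_def\<close>)
    next
      case False
      from good_progress[OF less.prems False] nostuck obtain st' where m: "mstep st st'" by blast
      from good_step[OF less.prems m] show ?thesis
      proof
        assume a: "good x st' \<and> mu st' < mu st"
        then have "concl (x # xs) st'" using less.hyps by blast
        then obtain sts where sts: "is_seq mstep sts" "hd sts = st'"
          and P: "\<exists>P. last sts = ([], [P]) \<and> represents P (last (x # xs))"
          and s1: "\<forall>y\<in>set sts. \<exists>x\<in>set (x # xs). good x y"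
          and s2: "\<forall>xa\<in>set (x # xs). \<exists>y\<in>set sts. good xa y"
          unfolding concl_def by blast
        have ne: "sts \<noteq> []" using sts by (simp add: is_seq_def)
        show ?thesis unfolding concl_def
          apply (rule exI[of _ "st # sts"])
          using sts P s1 s2 ne m less.prems by (auto simp: is_seq_Cons)
      next
        assume "\<exists>y. red x y \<and> good y st'"
        then obtain y where r: "red x y" and gy: "good y st'" by blast
        have xs: "xs \<noteq> []" using lst r lam_no_red by (cases xs) auto
        have y: "y = hd xs" using sq xs r red_det by (auto simp: is_seq_Cons)
        have "concl xs st'"
          using IHo[of st'] sq xs lst gy y by (auto simp: is_seq_Cons)
        then obtain sts where sts: "is_seq mstep sts" "hd sts = st'"
          and P: "\<exists>P. last sts = ([], [P]) \<and> represents P (last xs)"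
          and s1: "\<forall>y\<in>set sts. \<exists>x\<in>set xs. good x y"
          and s2: "\<forall>xa\<in>set xs. \<exists>y\<in>set sts. good xa y"
          unfolding concl_def by blast
        have ne: "sts \<noteq> []" using sts by (simp add: is_seq_def)
        show ?thesis unfolding concl_def
          apply (rule exI[of _ "st # sts"])
          using sts P s1 s2 ne m less.prems xs by (auto simp: is_seq_Cons)
      qed
    qed
  qed
qed

theorem theorem15:
  fixes s t :: tm and ss :: "tm list" and m :: nat
  assumes "is_seq red ss"
    and "hd ss = s" and "last ss = t"
    and "\<exists>u. t = TLam u"
    and "m = Max (tsize ` set ss)"
  shows "\<exists>P m' sts. represents P t \<and> m \<le> m' \<and> m' \<le> 2 * m
           \<and> is_seq mstep sts \<and> hd sts = init_state s \<and> last sts = ([], [P])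
           \<and> m' = Max (ssize ` set sts)"
proof -
  have g: "good (hd ss) (init_state s)" unfolding good_def init_state_def
    by (rule exI[of _ "[toks s]"], rule exI[of _ "[]"]) (use assms(2) in \<open>auto simp: code_toks toks_ne ev_toks[of s "[]", simplified]\<close>)
  have "concl ss (init_state s)" using run[OF assms(1) _ g] assms(3,4) by blast
  then obtain sts P where sts: "is_seq mstep sts" "hd sts = init_state s"
    and P: "last sts = ([], [P])" "represents P t"
    and s1: "\<forall>y\<in>set sts. \<exists>x\<in>set ss. good x y"
    and s2: "\<forall>x\<in>set ss. \<exists>y\<in>set sts. good x y"
    unfolding concl_def using assms(3) by blast
  define m' where "m' = Max (ssize ` set sts)"
  have nes: "set sts \<noteq> {}" using sts by (simp add: is_seq_def)
  have ness: "set ss \<noteq> {}" using assms(1) by (simp add: is_seq_def)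
  have "m \<le> m'" unfolding assms(5)
  proof (subst Max_le_iff)
    show "\<forall>a\<in>tsize ` set ss. a \<le> m'"
    proof
      fix a assume "a \<in> tsize ` set ss"
      then obtain x where x: "x \<in> set ss" "a = tsize x" by blast
      with s2 obtain y where y: "y \<in> set sts" "good x y" by blast
      have "ssize y \<le> m'" unfolding m'_def using y by simp
      then show "a \<le> m'" using good_size[OF y(2)] x by simp
    qed
  qed (use ness in auto)
  moreover have "m' \<le> 2 * m" unfolding m'_def
  proof (subst Max_le_iff)
    show "\<forall>a\<in>ssize ` set sts. a \<le> 2 * m"
    proof
      fix a assume "a \<in> ssize ` set sts"
      then obtain y where y: "y \<in> set sts" "a = ssize y" by blast
      with s1 obtain x where x: "x \<in> set ss" "good x y" by blast
      have "tsize x \<le> m" unfolding assms(5) using x by simp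
      then show "a \<le> 2 * m" using good_size[OF x(2)] y by simp
    qed
  qed (use nes in auto)
  ultimately show ?thesis using sts P m'_def by blast
qed

end
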